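(* Let $U\subseteq\mathbb{C}$ be open and $h:U\to\mathbb{C}$ holomorphic without zeros on $U$, $h=h_1+ih_2$ with $h_1,h_2$ real-valued functions of $(z_1,z_2)$, $z=z_1+iz_2$. Equip $U\subseteq\mathbb{R}^2$ with the Riemannian metric $g_{11}=g_{22}=1/(h_1^2+h_2^2)$, $g_{12}=g_{21}=0$ in coordinates $(z_1,z_2)$, and let $\nabla$ be its Levi-Civita connection. Let $\mathbf{h}=(h_1,h_2)^T$ and define the vector fields $\mathtt{h}=h_1\partial_1+h_2\partial_2$ and $\bar{\mathtt{h}}=-h_2\partial_1+h_1\partial_2$. Let $\mathtt{X}=X^1\partial_1+X^2\partial_2$ be a vector field such that $X^1+iX^2$ is a holomorphic function of $z=z_1+iz_2$ on $U$, and write $\mathbf{X}=(X^1,X^2)^T$. Let $J_{\mathbf{X}},J_{\mathbf{h}}\in\mathbb{R}^{2\times2}$ be the Jacobian matrices of $\mathbf{X}$ and $\mathbf{h}$ with respect to $(z_1,z_2)$, and $E=\begin{pmatrix}0&-1\\1&0\end{pmatrix}$. Then $$\nabla_{\mathtt{h}}\mathtt{X}=\sum_{k=1}^2\big(J_{\mathbf{X}}\mathbf{h}-J_{\mathbf{h}}\mathbf{X}\big)^k\partial_k,\qquad \nabla_{\bar{\mathtt{h}}}\mathtt{X}=\sum_{k=1}^2\big(E(J_{\mathbf{X}}\mathbf{h}-J_{\mathbf{h}}\mathbf{X})\big)^k\partial_k,$$ where $(\cdot)^k$ denotes the $k$-th component of a vector in $\mathbb{R}^2$.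
   Context: $\partial_k$ denotes the coordinate tangent vector in direction $z_k$. A vector field $X^1\partial_1+X^2\partial_2$ with $X^1+iX^2$ holomorphic is called a holomorphic splitting (of the holomorphic function $X^1+iX^2$); $\mathtt{h}$ and $\bar{\mathtt{h}}$ are the holomorphic splittings of $h$ and $ih$ respectively. *)

theory Defs
  imports "HOL-Complex_Analysis.Complex_Analysis"
begin

text \<open>We identify R^2 with C via (z1,z2) <-> z1 + i z2. Coordinate indices are 1 and 2.
  Scalar functions are of type complex => real; vector fields and 2-tensors are given by
  their coordinate components, indexed by nat (only indices 1, 2 are relevant).\<close>

definition coord_dir :: "nat \<Rightarrow> complex" where
  "coord_dir k = (if k = 1 then 1 else \<i>)"

definition pd :: "nat \<Rightarrow> (complex \<Rightarrow> real) \<Rightarrow> complex \<Rightarrow> real" where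
  "pd k f z = deriv (\<lambda>t::real. f (z + of_real t * coord_dir k)) 0"

definition splitting :: "(complex \<Rightarrow> complex) \<Rightarrow> nat \<Rightarrow> complex \<Rightarrow> real" where
  "splitting f k z = (if k = 1 then Re (f z) else Im (f z))"

definition inv_metric :: "(nat \<Rightarrow> nat \<Rightarrow> complex \<Rightarrow> real) \<Rightarrow> nat \<Rightarrow> nat \<Rightarrow> complex \<Rightarrow> real" where
  "inv_metric g k l z =
     (let d = g 1 1 z * g 2 2 z - g 1 2 z * g 2 1 z in
      if k = 1 \<and> l = 1 then g 2 2 z / d
      else if k = 1 \<and> l = 2 then - g 1 2 z / d
      else if k = 2 \<and> l = 1 then - g 2 1 z / d
      else g 1 1 z / d)"

definition christoffel :: "(nat \<Rightarrow> nat \<Rightarrow> complex \<Rightarrow> real) \<Rightarrow> nat \<Rightarrow> nat \<Rightarrow> nat \<Rightarrow> complex \<Rightarrow> real" where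
  "christoffel g k i j z =
     (1/2) * (\<Sum>l\<in>{1,2}. inv_metric g k l z *
        (pd i (g j l) z + pd j (g i l) z - pd l (g i j) z))"

definition lc_cov :: "(nat \<Rightarrow> nat \<Rightarrow> complex \<Rightarrow> real) \<Rightarrow> (nat \<Rightarrow> complex \<Rightarrow> real)
    \<Rightarrow> (nat \<Rightarrow> complex \<Rightarrow> real) \<Rightarrow> nat \<Rightarrow> complex \<Rightarrow> real" where
  "lc_cov g Y X k z =
     (\<Sum>i\<in>{1,2}. Y i z * pd i (X k) z)
     + (\<Sum>i\<in>{1,2}. \<Sum>j\<in>{1,2}. christoffel g k i j z * Y i z * X j z)"

definition conf_metric :: "(complex \<Rightarrow> complex) \<Rightarrow> nat \<Rightarrow> nat \<Rightarrow> complex \<Rightarrow> real" where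
  "conf_metric h i j z = (if i = j then 1 / ((Re (h z))\<^sup>2 + (Im (h z))\<^sup>2) else 0)"

definition jac :: "(nat \<Rightarrow> complex \<Rightarrow> real) \<Rightarrow> nat \<Rightarrow> nat \<Rightarrow> complex \<Rightarrow> real" where
  "jac F k j z = pd j (F k) z"

definition bracket_vec :: "(nat \<Rightarrow> complex \<Rightarrow> real) \<Rightarrow> (nat \<Rightarrow> complex \<Rightarrow> real) \<Rightarrow> nat \<Rightarrow> complex \<Rightarrow> real" where
  "bracket_vec X H k z = (\<Sum>j\<in>{1,2}. jac X k j z * H j z) - (\<Sum>j\<in>{1,2}. jac H k j z * X j z)"

definition rotE :: "(nat \<Rightarrow> real) \<Rightarrow> nat \<Rightarrow> real" where
  "rotE v k = (if k = 1 then - v 2 else v 1)"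

end

theory Submission
  imports Defs
begin

lemma line_deriv:
  assumes "(F has_field_derivative D) (at z)"
  shows "((\<lambda>t::real. F (z + of_real t * c)) has_vector_derivative (c * D)) (at 0)"
proof -
  have l: "((\<lambda>t::real. z + of_real t * c) has_vector_derivative c) (at 0)"
    by (auto intro!: derivative_eq_intros simp: has_vector_derivative_def scaleR_conv_of_real)
  have "((F \<circ> (\<lambda>t::real. z + of_real t * c)) has_vector_derivative (D * c)) (at 0)"
    apply (rule vector_derivative_diff_chain_within[OF l, of F "(*) D", simplified])
    using assms has_derivative_at_withinI
    by (simp add: has_field_derivative_def)
  then show ?thesis by (simp add: o_def mult.commute)
qed

lemma line_Re:
  assumes "(F has_field_derivative D) (at z)"
  shows "((\<lambda>t::real. Re (F (z + of_real t * c))) has_real_derivative Re (c * D)) (at 0)"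
  using line_deriv[OF assms, of c] unfolding has_vector_derivative_complex_iff
  by (simp add: has_real_derivative_iff_has_vector_derivative)

lemma line_Im:
  assumes "(F has_field_derivative D) (at z)"
  shows "((\<lambda>t::real. Im (F (z + of_real t * c))) has_real_derivative Im (c * D)) (at 0)"
  using line_deriv[OF assms, of c] unfolding has_vector_derivative_complex_iff
  by (simp add: has_real_derivative_iff_has_vector_derivative)

lemma pd_Re: "(F has_field_derivative D) (at z) \<Longrightarrow> pd k (\<lambda>w. Re (F w)) z = Re (coord_dir k * D)"
  unfolding pd_def by (rule DERIV_imp_deriv, rule line_Re)
lemma pd_Im: "(F has_field_derivative D) (at z) \<Longrightarrow> pd k (\<lambda>w. Im (F w)) z = Im (coord_dir k * D)"
  unfolding pd_def by (rule DERIV_imp_deriv, rule line_Im)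

lemma pd_const: "pd k (\<lambda>w. 0) z = 0"
  unfolding pd_def by simp

lemma aux_inv: "- (inverse s * d * inverse s) = - d / (s::real)^2"
  by (simp add: power2_eq_square divide_inverse)

lemma pd_q:
  assumes "(F has_field_derivative D) (at z)" "F z \<noteq> 0"
  shows "pd k (\<lambda>w. 1 / ((Re (F w))\<^sup>2 + (Im (F w))\<^sup>2)) z
     = - (2 * Re (F z) * Re (coord_dir k * D) + 2 * Im (F z) * Im (coord_dir k * D))
        / ((Re (F z))\<^sup>2 + (Im (F z))\<^sup>2)^2"
proof -
  have q: "(Re (F z))\<^sup>2 + (Im (F z))\<^sup>2 \<noteq> 0" using assms(2)
    by (metis complex_eq_0 add.commute)
  define A where "A = (\<lambda>t::real. Re (F (z + of_real t * coord_dir k)))"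
  define B where "B = (\<lambda>t::real. Im (F (z + of_real t * coord_dir k)))"
  have dA: "(A has_real_derivative Re (coord_dir k * D)) (at 0)"
    unfolding A_def by (rule line_Re[OF assms(1)])
  have dB: "(B has_real_derivative Im (coord_dir k * D)) (at 0)"
    unfolding B_def by (rule line_Im[OF assms(1)])
  have A0: "A 0 = Re (F z)" and B0: "B 0 = Im (F z)" by (simp_all add: A_def B_def)
  have dS: "((\<lambda>t. (A t)\<^sup>2 + (B t)\<^sup>2) has_real_derivative
      (2 * Re (F z) * Re (coord_dir k * D) + 2 * Im (F z) * Im (coord_dir k * D))) (at 0)"
    using DERIV_add[OF DERIV_power[OF dA, of 2] DERIV_power[OF dB, of 2]] A0 B0
    by (simp add: algebra_simps)
  have "((\<lambda>t. inverse ((A t)\<^sup>2 + (B t)\<^sup>2)) has_real_derivative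
      - (2 * Re (F z) * Re (coord_dir k * D) + 2 * Im (F z) * Im (coord_dir k * D))
        / ((Re (F z))\<^sup>2 + (Im (F z))\<^sup>2)^2) (at 0)"
    apply (rule DERIV_cong[OF DERIV_inverse'[OF dS]])
    using q A0 B0 apply simp
    by (simp only: A0 B0 aux_inv)
  then show ?thesis unfolding pd_def A_def B_def inverse_eq_divide by (rule DERIV_imp_deriv)
qed

theorem lemma2:
  fixes U :: "complex set" and h f :: "complex \<Rightarrow> complex"
  assumes "open U"
    and "h holomorphic_on U"
    and "\<forall>z\<in>U. h z \<noteq> 0"
    and "f holomorphic_on U"
  shows "\<forall>z\<in>U. \<forall>k\<in>{1,2}.
           lc_cov (conf_metric h) (splitting h) (splitting f) k z
             = bracket_vec (splitting f) (splitting h) k z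
         \<and> lc_cov (conf_metric h) (splitting (\<lambda>w. \<i> * h w)) (splitting f) k z
             = rotE (\<lambda>m. bracket_vec (splitting f) (splitting h) m z) k"
proof (intro ballI)
  fix z k assume z: "z \<in> U" and k: "k \<in> {1::nat,2}"
  have dh: "(h has_field_derivative deriv h z) (at z)"
    using assms(1,2) z holomorphic_derivI by blast
  have df: "(f has_field_derivative deriv f z) (at z)"
    using assms(1,4) z holomorphic_derivI by blast
  have hz: "h z \<noteq> 0" using assms(3) z by blast
  have q: "(Re (h z))\<^sup>2 + (Im (h z))\<^sup>2 \<noteq> 0" using hz
    by (metis complex_eq_0 add.commute)
  have s1: "splitting F 1 = (\<lambda>w. Re (F w))" for F by (rule ext) (simp add: splitting_def)
  have s1': "splitting F (Suc 0) = (\<lambda>w. Re (F w))" for F by (rule ext) (simp add: splitting_def)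
  have s2: "splitting F 2 = (\<lambda>w. Im (F w))" for F by (rule ext) (simp add: splitting_def)
  have g: "conf_metric h i j = (if i = j then (\<lambda>w. 1 / ((Re (h w))\<^sup>2 + (Im (h w))\<^sup>2)) else (\<lambda>w. 0))" for i j
    by (auto simp: conf_metric_def)
  define a where "a = Re (h z)"
  define b where "b = Im (h z)"
  define p where "p = Re (deriv h z)"
  define r where "r = Im (deriv h z)"
  define x where "x = Re (f z)"
  define y where "y = Im (f z)"
  define u where "u = Re (deriv f z)"
  define v where "v = Im (deriv f z)"
  have q': "a\<^sup>2 + b\<^sup>2 \<noteq> 0" using q by (simp add: a_def b_def)
  have q4: "a*(a*(a*(a*2))) + (b*(b*(b*(b*2))) + a*(a*(b*(b*4)))) \<noteq> 0"
    "a*(a*(a*a)) + (b*(b*(b*b)) + a*(a*(b*(b*2)))) \<noteq> 0"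
  proof -
    have n: "(a\<^sup>2+b\<^sup>2)^2 \<noteq> 0" using q' by simp
    have e: "a*(a*(a*(a*2))) + (b*(b*(b*(b*2))) + a*(a*(b*(b*4)))) = 2*(a\<^sup>2+b\<^sup>2)^2"
      "a*(a*(a*a)) + (b*(b*(b*b)) + a*(a*(b*(b*2)))) = (a\<^sup>2+b\<^sup>2)^2"
      by (simp_all add: power2_eq_square algebra_simps)
    show "a*(a*(a*(a*2))) + (b*(b*(b*(b*2))) + a*(a*(b*(b*4)))) \<noteq> 0"
      "a*(a*(a*a)) + (b*(b*(b*b)) + a*(a*(b*(b*2)))) \<noteq> 0"
      unfolding e using n by simp_all
  qed
  define N where "N = a\<^sup>2 + b\<^sup>2"
  have N0: "N \<noteq> 0" using q' by (simp add: N_def)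
  have canc: "N * c / (N\<^sup>2 * 2) = c / (2 * N)" for c
    using N0 by (simp add: power2_eq_square)
  note pds = pd_Re[OF dh] pd_Im[OF dh] pd_Re[OF df] pd_Im[OF df] pd_q[OF dh hz] pd_const
  show "lc_cov (conf_metric h) (splitting h) (splitting f) k z
             = bracket_vec (splitting f) (splitting h) k z
         \<and> lc_cov (conf_metric h) (splitting (\<lambda>w. \<i> * h w)) (splitting f) k z
             = rotE (\<lambda>m. bracket_vec (splitting f) (splitting h) m z) k"
    using k q' N0
    apply (simp add: lc_cov_def christoffel_def inv_metric_def bracket_vec_def jac_def rotE_def
       s1 s1' s2 g pds conf_metric_def Let_def)
    apply (auto simp: coord_dir_def splitting_def
       a_def[symmetric] b_def[symmetric] p_def[symmetric] r_def[symmetric]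
       x_def[symmetric] y_def[symmetric] u_def[symmetric] v_def[symmetric]
       )
    apply (simp_all only: N_def[symmetric] mult.assoc)
    apply (simp_all only: canc)
    apply (simp_all add: field_simps)
    apply (simp_all add: N_def power2_eq_square algebra_simps)
    done
qed

end
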